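(* Let $\Omega$ be a domain, let $\mathcal{X}$ be a Banach space continuously embedded in $L^2(\Omega)$, and let $J:\mathcal{X}\to[0,\infty]$ be a convex, absolutely one-homogeneous functional ($J(cu)=|c|J(u)$) with $J(u)>0$ for all $u\in\mathcal{X}\setminus\{0\}$, such that the gradient flow, variational problem and inverse scale space flow below are well posed. Let $f\in\mathcal{X}$ be a (nonlinear) eigenfunction of $J$ with eigenvalue $\lambda>0$, i.e. $\lambda f\in\partial J(f)$. Then, for each $*\in\{\mathrm{GF},\mathrm{VM},\mathrm{IS}\}$, the wavelength and frequency spectral representations (defined in the context) satisfy, in the sense of distributions, $$\phi_*(t)=f\,\delta_{1/\lambda}(t),\qquad \psi_*(s)=f\,\delta_{\lambda}(s),$$ where $\delta_a$ denotes the Dirac delta at $a$.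
   Context: $\partial J(u)$ denotes the subdifferential of $J$ at $u$ (with respect to the $L^2(\Omega)$ inner product). Time derivatives below are taken in the distributional sense. Gradient flow (GF): $u_{GF}(t)$ solves $\partial_t u=-p_{GF}$, $p_{GF}(t)\in\partial J(u(t))$ for $t>0$, $u(0)=f$. Define $\phi_{GF}(t)=t\,\partial_{tt}u_{GF}(t)=-t\,\partial_t p_{GF}(t)$ and $\psi_{GF}(s)=\frac{1}{s^3}\partial_{tt}u_{GF}(\tfrac1s)$. Variational method (VM): $u_{VM}(t)$ is the minimizer over $u\in\mathcal{X}$ of $\frac12\|u-f\|_2^2+tJ(u)$, so $u_{VM}(t)=f-tp_{VM}(t)$ with $p_{VM}(t)\in\partial J(u_{VM}(t))$. Define $\phi_{VM}(t)=t\,\partial_{tt}u_{VM}(t)=-\partial_t(t^2\partial_t p_{VM}(t))$; with $v_{VM}(s)=u_{VM}(1/s)$ (the minimizer of $\frac s2\|v-f\|_2^2+J(v)$), define $\psi_{VM}(s)=\frac{1}{s^3}\partial_{tt}u_{VM}(\tfrac1s)=\frac1s\partial_s(s^2\partial_s v_{VM}(s))$. Inverse scale space (IS): $v_{IS}(s)$ solves $\partial_s q_{IS}=f-v$, $q_{IS}(s)\in\partial J(v(s))$ for $s>0$, $v(0)=0$. Define $\psi_{IS}(s)=\partial_s v_{IS}(s)$; with $u_{IS}(t)=v_{IS}(1/t)$ define $\phi_{IS}(t)=-\partial_t u_{IS}(t)$. In all cases $\phi_*$ and $\psi_*$ are related by $\psi_*(s)=\phi_*(1/s)/s^2$, equivalently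 $\int_0^\infty\phi_*(t)w(t)\,dt=\int_0^\infty\psi_*(s)w(1/s)\,ds$ for test functions $w$. *)

theory Defs
  imports "HOL-Analysis.Analysis"
begin

text \<open>The ambient Hilbert space H (playing the role of L2 of Omega) is an abstract real
  inner product space of type 'a, complete and separable.\<close>

definition banach_embedded :: "'a::{real_inner,banach,second_countable_topology} set \<Rightarrow> ('a \<Rightarrow> real) \<Rightarrow> bool" where
  "banach_embedded X nX \<longleftrightarrow>
     subspace X \<and>
     (\<forall>x\<in>X. nX x \<ge> 0 \<and> (nX x = 0 \<longleftrightarrow> x = 0)) \<and>
     (\<forall>x\<in>X. \<forall>y\<in>X. nX (x + y) \<le> nX x + nX y) \<and>
     (\<forall>x\<in>X. \<forall>c. nX (c *\<^sub>R x) = \<bar>c\<bar> * nX x) \<and>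
     (\<forall>s. (\<forall>n. s n \<in> X) \<longrightarrow> (\<forall>e>0. \<exists>N. \<forall>m\<ge>N. \<forall>n\<ge>N. nX (s m - s n) < e) \<longrightarrow>
          (\<exists>x\<in>X. (\<lambda>n. nX (s n - x)) \<longlonglongrightarrow> 0)) \<and>
     (\<exists>C. \<forall>x\<in>X. norm x \<le> C * nX x)"

definition subdiff :: "'a::real_inner set \<Rightarrow> ('a \<Rightarrow> ereal) \<Rightarrow> 'a \<Rightarrow> 'a set" where
  "subdiff X J u = {p. u \<in> X \<and> J u \<noteq> \<infinity> \<and> (\<forall>v\<in>X. J u + ereal (p \<bullet> (v - u)) \<le> J v)}"

definition test_function :: "(real \<Rightarrow> real) \<Rightarrow> bool" where
  "test_function w \<longleftrightarrow>
     (\<forall>n x. ((deriv ^^ n) w) differentiable (at x)) \<and>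
     (\<exists>a b. 0 < a \<and> a \<le> b \<and> (\<forall>t. t \<notin> {a..b} \<longrightarrow> w t = 0))"

definition dist_deriv :: "(real \<Rightarrow> 'a::{banach,second_countable_topology}) \<Rightarrow> (real \<Rightarrow> 'a) \<Rightarrow> bool" where
  "dist_deriv u d \<longleftrightarrow>
     (\<forall>a b. 0 < a \<longrightarrow> set_integrable lborel {a..b} u \<and> set_integrable lborel {a..b} d) \<and>
     (\<forall>w. test_function w \<longrightarrow>
        (LINT t:{0<..}|lborel. deriv w t *\<^sub>R u t) = - (LINT t:{0<..}|lborel. w t *\<^sub>R d t))"

definition GF_sol :: "'a::{real_inner,banach,second_countable_topology} set \<Rightarrow> ('a \<Rightarrow> ereal) \<Rightarrow> 'a \<Rightarrow>
    (real \<Rightarrow> 'a) \<Rightarrow> (real \<Rightarrow> 'a) \<Rightarrow> bool" where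
  "GF_sol X J g u p \<longleftrightarrow>
     continuous_on {0..} u \<and> u 0 = g \<and>
     (\<forall>t>0. p t \<in> subdiff X J (u t)) \<and>
     dist_deriv u (\<lambda>t. - p t)"

definition VM_sol :: "'a::real_inner set \<Rightarrow> ('a \<Rightarrow> ereal) \<Rightarrow> 'a \<Rightarrow> (real \<Rightarrow> 'a) \<Rightarrow> bool" where
  "VM_sol X J g u \<longleftrightarrow>
     (\<forall>t>0. u t \<in> X \<and>
        (\<forall>v\<in>X. ereal (norm (u t - g)^2 / 2) + ereal t * J (u t)
               \<le> ereal (norm (v - g)^2 / 2) + ereal t * J v))"

definition IS_sol :: "'a::{real_inner,banach,second_countable_topology} set \<Rightarrow> ('a \<Rightarrow> ereal) \<Rightarrow> 'a \<Rightarrow>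
    (real \<Rightarrow> 'a) \<Rightarrow> (real \<Rightarrow> 'a) \<Rightarrow> bool" where
  "IS_sol X J g v q \<longleftrightarrow>
     v 0 = 0 \<and> continuous_on {0..} q \<and> q 0 = 0 \<and>
     (\<forall>s>0. q s \<in> subdiff X J (v s)) \<and>
     dist_deriv q (\<lambda>s. g - v s)"

text \<open>phi(t) = t \<partial>_tt u(t)  (used for GF and VM):  <phi,w> = \<integral> u(t) (t w(t))'' dt.\<close>
definition phi_tt :: "(real \<Rightarrow> 'a::{banach,second_countable_topology}) \<Rightarrow> (real \<Rightarrow> real) \<Rightarrow> 'a" where
  "phi_tt u w = (LINT t:{0<..}|lborel. deriv (deriv (\<lambda>r. r * w r)) t *\<^sub>R u t)"

text \<open>psi_GF(s) = s^-3 (\<partial>_tt u)(1/s):  <psi,w> = <\<partial>_tt u, t \<mapsto> t w(1/t)> = \<integral> u(t) (t w(1/t))'' dt.\<close>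
definition psi_GF :: "(real \<Rightarrow> 'a::{banach,second_countable_topology}) \<Rightarrow> (real \<Rightarrow> real) \<Rightarrow> 'a" where
  "psi_GF u w = (LINT t:{0<..}|lborel. deriv (deriv (\<lambda>r. r * w (1 / r))) t *\<^sub>R u t)"

text \<open>psi_VM(s) = (1/s) \<partial>_s (s^2 \<partial>_s v(s)) with v(s) = u(1/s):
  <psi,w> = \<integral> v(s) (s^2 (w(s)/s)')' ds.\<close>
definition psi_VM :: "(real \<Rightarrow> 'a::{banach,second_countable_topology}) \<Rightarrow> (real \<Rightarrow> real) \<Rightarrow> 'a" where
  "psi_VM u w = (LINT s:{0<..}|lborel. deriv (\<lambda>r. r^2 * deriv (\<lambda>x. w x / x) r) s *\<^sub>R u (1 / s))"

text \<open>psi_IS(s) = \<partial>_s v(s):  <psi,w> = - \<integral> v(s) w'(s) ds.\<close>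
definition psi_IS :: "(real \<Rightarrow> 'a::{banach,second_countable_topology}) \<Rightarrow> (real \<Rightarrow> real) \<Rightarrow> 'a" where
  "psi_IS v w = - (LINT s:{0<..}|lborel. deriv w s *\<^sub>R v s)"

text \<open>phi_IS(t) = - \<partial>_t u_IS(t) with u_IS(t) = v(1/t):  <phi,w> = \<integral> v(1/t) w'(t) dt.\<close>
definition phi_IS :: "(real \<Rightarrow> 'a::{banach,second_countable_topology}) \<Rightarrow> (real \<Rightarrow> real) \<Rightarrow> 'a" where
  "phi_IS v w = (LINT t:{0<..}|lborel. deriv w t *\<^sub>R v (1 / t))"

end

theory Submission
  imports Defs
begin

lemma integral_scaleR_left_gen:
  fixes h :: "real \<Rightarrow> real" and c :: "'a::{banach,second_countable_topology,real_inner}"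
  shows "(\<integral>x. h x *\<^sub>R c \<partial>lborel) = integral\<^sup>L lborel h *\<^sub>R c"
proof (cases "c = 0")
  case True then show ?thesis by simp
next
  case False
  show ?thesis
  proof (cases "integrable lborel h")
    case True then show ?thesis by simp
  next
    case nI: False
    have "\<not> integrable lborel (\<lambda>x. h x *\<^sub>R c)"
    proof
      assume "integrable lborel (\<lambda>x. h x *\<^sub>R c)"
      then have "integrable lborel (\<lambda>x. inner (h x *\<^sub>R c) c / (inner c c))"
        by (intro integrable_divide_zero integrable_inner_left)
      moreover have "(\<lambda>x. inner (h x *\<^sub>R c) c / (inner c c)) = h" using False by auto
      ultimately show False using nI by simp
    qed
    then show ?thesis using nI by (simp add: not_integrable_integral_eq)
  qed
qed

lemma vec_reduce:
  fixes k c :: "real \<Rightarrow> real" and f :: "'a::{banach,second_countable_topology,real_inner}"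
  shows "(LINT t:A|lborel. k t *\<^sub>R (c t *\<^sub>R f)) = (\<integral>t. (k t * c t) * indicator A t \<partial>lborel) *\<^sub>R f"
proof -
  have "(\<lambda>t. indicator A t *\<^sub>R (k t *\<^sub>R (c t *\<^sub>R f))) = (\<lambda>t. ((k t * c t) * indicator A t) *\<^sub>R f)"
    by (auto simp: indicator_def)
  then show ?thesis unfolding set_lebesgue_integral_def using integral_scaleR_left_gen[of "\<lambda>t. k t * c t * indicator A t" f] by simp
qed

lemma deriv_zero_open:
  fixes g :: "real \<Rightarrow> real"
  assumes "open S" "x \<in> S" "\<And>y. y \<in> S \<Longrightarrow> g y = 0"
  shows "(g has_real_derivative 0) (at x)"
  using has_field_derivative_transform_within_open[of "\<lambda>_. 0" 0 x S g] assms by auto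

lemma test_facts:
  assumes "test_function w"
  obtains a b where "0 < a" "a \<le> b"
    "\<And>x. (w has_real_derivative deriv w x) (at x)"
    "\<And>x. (deriv w has_real_derivative deriv (deriv w) x) (at x)"
    "\<And>x. isCont (deriv (deriv w)) x"
    "\<And>t. t < a \<or> b < t \<Longrightarrow> w t = 0 \<and> deriv w t = 0 \<and> deriv (deriv w) t = 0"
proof -
  from assms obtain a b where ab: "0 < a" "a \<le> b" "\<And>t. t \<notin> {a..b} \<Longrightarrow> w t = 0"
    and d: "\<And>n x. ((deriv ^^ n) w) differentiable (at x)"
    unfolding test_function_def by blast
  have d0: "\<And>x. (w has_real_derivative deriv w x) (at x)"
    using d[of 0] by (simp add: DERIV_deriv_iff_real_differentiable)
  have d1: "\<And>x. (deriv w has_real_derivative deriv (deriv w) x) (at x)"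
    using d[of 1] by (simp add: DERIV_deriv_iff_real_differentiable)
  have d2: "\<And>x. isCont (deriv (deriv w)) x"
    using d[of 2] by (simp add: differentiable_imp_continuous_within numeral_2_eq_2)
  have z: "w t = 0 \<and> deriv w t = 0 \<and> deriv (deriv w) t = 0" if t: "t < a \<or> b < t" for t
  proof -
    define S where "S = {..<a} \<union> {b<..}"
    have oS: "open S" unfolding S_def by auto
    have tS: "t \<in> S" using t unfolding S_def by auto
    have w0: "\<And>y. y \<in> S \<Longrightarrow> w y = 0" using ab unfolding S_def by auto
    have w1: "\<And>y. y \<in> S \<Longrightarrow> deriv w y = 0"
      using deriv_zero_open[OF oS, of _ w] w0 DERIV_imp_deriv by blast
    have w2: "\<And>y. y \<in> S \<Longrightarrow> deriv (deriv w) y = 0"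
      using deriv_zero_open[OF oS, of _ "deriv w"] w1 DERIV_imp_deriv by blast
    show ?thesis using w0 w1 w2 tS by auto
  qed
  show ?thesis using that ab d0 d1 d2 z by blast
qed

lemma eig_basic:
  fixes X :: "'a::{real_inner,banach,second_countable_topology} set" and J :: "'a \<Rightarrow> ereal"
  assumes X_banach: "banach_embedded X nX"
    and J_nonneg: "\<forall>u\<in>X. J u \<ge> 0"
    and J_hom: "\<forall>u\<in>X. \<forall>c. J (c *\<^sub>R u) = ereal \<bar>c\<bar> * J u"
    and f_X: "f \<in> X"
    and eigen: "lam *\<^sub>R f \<in> subdiff X J f"
  shows "J 0 = 0" "J f = ereal (lam * (f \<bullet> f))" "\<forall>v\<in>X. ereal (lam * (f \<bullet> v)) \<le> J v"
proof -
  have sub: "subspace X" using X_banach unfolding banach_embedded_def by blast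
  have "J (0 *\<^sub>R f) = ereal \<bar>0\<bar> * J f" using J_hom f_X by blast
  then have J0: "J 0 = 0" by (simp add: zero_ereal_def[symmetric])
  show "J 0 = 0" by (rule J0)
  have e: "J f \<noteq> \<infinity>" "\<forall>v\<in>X. J f + ereal ((lam *\<^sub>R f) \<bullet> (v - f)) \<le> J v"
    using eigen unfolding subdiff_def by auto
  obtain jf where jf: "J f = ereal jf" using e(1) J_nonneg f_X
    by (cases "J f") auto
  have X0: "0 \<in> X" using sub by (simp add: subspace_0)
  have X2: "2 *\<^sub>R f \<in> X" using sub f_X by (simp add: subspace_scale)
  have "J f + ereal ((lam *\<^sub>R f) \<bullet> (0 - f)) \<le> J 0" using e(2) X0 by blast
  then have i1: "jf - lam * (f \<bullet> f) \<le> 0" using J0 jf by simp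
  have "J (2 *\<^sub>R f) = ereal (2 * jf)" using J_hom f_X jf by simp
  moreover have "J f + ereal ((lam *\<^sub>R f) \<bullet> (2 *\<^sub>R f - f)) \<le> J (2 *\<^sub>R f)" using e(2) X2 by blast
  ultimately have i2: "jf + lam * (f \<bullet> f) \<le> 2 * jf" using jf by (simp add: algebra_simps)
  have jfe: "jf = lam * (f \<bullet> f)" using i1 i2 by linarith
  show "J f = ereal (lam * (f \<bullet> f))" using jf jfe by simp
  show "\<forall>v\<in>X. ereal (lam * (f \<bullet> v)) \<le> J v"
  proof
    fix v assume v: "v \<in> X"
    have "J f + ereal ((lam *\<^sub>R f) \<bullet> (v - f)) \<le> J v" using e(2) v by blast
    moreover have "J f + ereal ((lam *\<^sub>R f) \<bullet> (v - f)) = ereal (lam * (f \<bullet> v))"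
      using jf jfe by (simp add: inner_diff_right algebra_simps)
    ultimately show "ereal (lam * (f \<bullet> v)) \<le> J v" by simp
  qed
qed

lemma eig_subdiff:
  fixes X :: "'a::{real_inner,banach,second_countable_topology} set" and J :: "'a \<Rightarrow> ereal"
  assumes X_banach: "banach_embedded X nX"
    and J_nonneg: "\<forall>u\<in>X. J u \<ge> 0"
    and J_hom: "\<forall>u\<in>X. \<forall>c. J (c *\<^sub>R u) = ereal \<bar>c\<bar> * J u"
    and f_X: "f \<in> X"
    and eigen: "lam *\<^sub>R f \<in> subdiff X J f"
    and lam_pos: "lam > 0"
    and c: "c \<ge> 0" "0 \<le> mu" "mu \<le> lam" "c = 0 \<or> mu = lam"
  shows "mu *\<^sub>R f \<in> subdiff X J (c *\<^sub>R f)"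
proof -
  note E = eig_basic[OF X_banach J_nonneg J_hom f_X eigen]
  have sub: "subspace X" using X_banach unfolding banach_embedded_def by blast
  have cX: "c *\<^sub>R f \<in> X" using sub f_X by (simp add: subspace_scale)
  have "J (c *\<^sub>R f) = ereal \<bar>c\<bar> * J f" using J_hom f_X by blast
  then have Jc: "J (c *\<^sub>R f) = ereal (c * (lam * (f \<bullet> f)))" using E(2) c(1) by simp
  have key: "J (c *\<^sub>R f) + ereal ((mu *\<^sub>R f) \<bullet> (v - c *\<^sub>R f)) \<le> J v" if v: "v \<in> X" for v
  proof -
    have r: "c * (lam * (f \<bullet> f)) + mu * (f \<bullet> v - c * (f \<bullet> f)) = mu * (f \<bullet> v)"
      using c(4) by (auto simp: algebra_simps)
    have "J (c *\<^sub>R f) + ereal ((mu *\<^sub>R f) \<bullet> (v - c *\<^sub>R f)) = ereal (mu * (f \<bullet> v))"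
    proof -
      have "(mu *\<^sub>R f) \<bullet> (v - c *\<^sub>R f) = mu * (f \<bullet> v - c * (f \<bullet> f))"
        by (simp add: inner_diff_right algebra_simps)
      then show ?thesis unfolding Jc using r by (metis plus_ereal.simps(1))
    qed
    also have "\<dots> \<le> J v"
    proof (cases "f \<bullet> v \<ge> 0")
      case True
      then have "mu * (f \<bullet> v) \<le> lam * (f \<bullet> v)" using c(3) by (rule mult_right_mono[rotated])
      then have "ereal (mu * (f \<bullet> v)) \<le> ereal (lam * (f \<bullet> v))" by simp
      then show ?thesis using E(3) v by (meson order_trans)
    next
      case False
      then have "mu * (f \<bullet> v) \<le> 0" using c(2) by (simp add: mult_nonneg_nonpos)
      then have "ereal (mu * (f \<bullet> v)) \<le> 0" by (simp add: zero_ereal_def)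
      then show ?thesis using J_nonneg v by (meson order_trans)
    qed
    finally show ?thesis .
  qed
  have "J (c *\<^sub>R f) \<noteq> \<infinity>" using Jc by simp
  then show ?thesis unfolding subdiff_def using cX key by blast
qed

lemma max_cases:
  fixes lam t :: real assumes "lam > 0"
  shows "t \<le> 1/lam \<Longrightarrow> max (1 - lam * t) 0 = 1 - lam * t"
    "t > 1/lam \<Longrightarrow> max (1 - lam * t) 0 = 0"
  using assms by (auto simp: field_simps max_def)

lemma int_cont:
  fixes g :: "real \<Rightarrow> real"
  assumes "\<And>x. isCont g x"
  shows "integrable lborel (\<lambda>x. g x * indicator {c..d} x)"
proof -
  have "integrable lborel (\<lambda>x. indicator {c..d} x *\<^sub>R g x)"
    by (rule borel_integrable_compact) (auto intro!: continuous_at_imp_continuous_on assms)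
  then show ?thesis by (simp add: mult.commute)
qed

lemma GF_dd_real:
  assumes w: "test_function w" and lam: "lam > 0"
  shows "(\<integral>t. (deriv w t * max (1 - lam * t) 0) * indicator {0<..} t \<partial>lborel)
       = (\<integral>t. (w t * (if t \<le> 1 / lam then lam else 0)) * indicator {0<..} t \<partial>lborel)"
proof -
  obtain a b where ab: "0 < a" "a \<le> b"
    and d0: "\<And>x. (w has_real_derivative deriv w x) (at x)"
    and d1: "\<And>x. (deriv w has_real_derivative deriv (deriv w) x) (at x)"
    and c2: "\<And>x. isCont (deriv (deriv w)) x"
    and z: "\<And>t. t < a \<or> b < t \<Longrightarrow> w t = 0 \<and> deriv w t = 0 \<and> deriv (deriv w) t = 0"
    using test_facts[OF w] by blast
  have cw: "\<And>x. isCont w x" using d0 DERIV_isCont by blast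
  have cw1: "\<And>x. isCont (deriv w) x" using d1 DERIV_isCont by blast
  have z0: "w 0 = 0" "deriv w 0 = 0" using z ab by auto
  have e1: "(\<lambda>t. (deriv w t * max (1 - lam * t) 0) * indicator {0<..} t)
      = (\<lambda>t. (lam * w t + (deriv w t * (1 - lam * t) - lam * w t)) * indicator {0..1/lam} t)"
  proof
    fix t show "(deriv w t * max (1 - lam * t) 0) * indicator {0<..} t
      = (lam * w t + (deriv w t * (1 - lam * t) - lam * w t)) * indicator {0..1/lam} t"
      using lam z0 max_cases[OF lam, of t] by (cases "t = 0") (auto simp: indicator_def not_le)
  qed
  have e2: "(\<lambda>t. (w t * (if t \<le> 1 / lam then lam else 0)) * indicator {0<..} t)
      = (\<lambda>t. (lam * w t) * indicator {0..1/lam} t)"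
  proof
    fix t show "(w t * (if t \<le> 1 / lam then lam else 0)) * indicator {0<..} t
      = (lam * w t) * indicator {0..1/lam} t"
      using lam z0 by (cases "t = 0") (auto simp: indicator_def)
  qed
  have i1: "integrable lborel (\<lambda>t. (lam * w t) * indicator {0..1/lam} t)"
    by (rule int_cont) (intro continuous_intros cw)
  have i2: "integrable lborel (\<lambda>t. (deriv w t * (1 - lam * t) - lam * w t) * indicator {0..1/lam} t)"
    by (rule int_cont) (intro continuous_intros cw cw1)
  have ftc: "(\<integral>t. (deriv w t * (1 - lam * t) - lam * w t) * indicator {0..1/lam} t \<partial>lborel)
      = w (1/lam) * (1 - lam * (1/lam)) - w 0 * (1 - lam * 0)"
    by (rule integral_FTC_Icc_real[where F = "\<lambda>t. w t * (1 - lam * t)"])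
       (use lam in \<open>auto intro!: derivative_eq_intros d0 continuous_intros cw cw1 simp: algebra_simps\<close>)
  have "(\<integral>t. (lam * w t + (deriv w t * (1 - lam * t) - lam * w t)) * indicator {0..1/lam} t \<partial>lborel)
      = (\<integral>t. (lam * w t) * indicator {0..1/lam} t \<partial>lborel)
       + (\<integral>t. (deriv w t * (1 - lam * t) - lam * w t) * indicator {0..1/lam} t \<partial>lborel)"
    using Bochner_Integration.integral_add[OF i1 i2] by (simp only: distrib_right)
  then show ?thesis unfolding e1 e2 ftc using lam z0 by simp
qed

lemma isCont_transform_open:
  fixes f g :: "real \<Rightarrow> real"
  assumes "isCont g x" "open S" "x \<in> S" "\<And>y. y \<in> S \<Longrightarrow> g y = f y"
  shows "isCont f x"
  using continuous_transform_within_openin[of x UNIV g S f] assms by auto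

lemma G1_deriv:
  assumes w: "test_function w"
  shows "deriv (deriv (\<lambda>r. r * w r)) = (\<lambda>t. 2 * deriv w t + t * deriv (deriv w) t)"
proof -
  obtain a b where d0: "\<And>x. (w has_real_derivative deriv w x) (at x)"
    and d1: "\<And>x. (deriv w has_real_derivative deriv (deriv w) x) (at x)"
    using test_facts[OF w] by blast
  have "deriv (\<lambda>r. r * w r) = (\<lambda>r. w r + r * deriv w r)"
  proof
    fix x show "deriv (\<lambda>r. r * w r) x = w x + x * deriv w x"
      by (rule DERIV_imp_deriv) (auto intro!: derivative_eq_intros d0)
  qed
  moreover have "deriv (\<lambda>r. w r + r * deriv w r) = (\<lambda>t. 2 * deriv w t + t * deriv (deriv w) t)"
  proof
    fix x show "deriv (\<lambda>r. w r + r * deriv w r) x = 2 * deriv w x + x * deriv (deriv w) x"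
      by (rule DERIV_imp_deriv) (auto intro!: derivative_eq_intros d0 d1)
  qed
  ultimately show ?thesis by simp
qed

lemma GF_phi_real:
  assumes w: "test_function w" and lam: "lam > 0"
  shows "(\<integral>t. ((2 * deriv w t + t * deriv (deriv w) t) * max (1 - lam * t) 0) * indicator {0<..} t \<partial>lborel)
       = w (1 / lam)"
proof -
  obtain a b where ab: "0 < a" "a \<le> b"
    and d0: "\<And>x. (w has_real_derivative deriv w x) (at x)"
    and d1: "\<And>x. (deriv w has_real_derivative deriv (deriv w) x) (at x)"
    and c2: "\<And>x. isCont (deriv (deriv w)) x"
    and z: "\<And>t. t < a \<or> b < t \<Longrightarrow> w t = 0 \<and> deriv w t = 0 \<and> deriv (deriv w) t = 0"
    using test_facts[OF w] by blast
  have cw: "\<And>x. isCont w x" using d0 DERIV_isCont by blast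
  have cw1: "\<And>x. isCont (deriv w) x" using d1 DERIV_isCont by blast
  have z0: "w 0 = 0" "deriv w 0 = 0" using z ab by auto
  have e1: "(\<lambda>t. ((2 * deriv w t + t * deriv (deriv w) t) * max (1 - lam * t) 0) * indicator {0<..} t)
      = (\<lambda>t. ((2 * deriv w t + t * deriv (deriv w) t) * (1 - lam * t)) * indicator {0..1/lam} t)"
  proof
    fix t show "((2 * deriv w t + t * deriv (deriv w) t) * max (1 - lam * t) 0) * indicator {0<..} t
      = ((2 * deriv w t + t * deriv (deriv w) t) * (1 - lam * t)) * indicator {0..1/lam} t"
      using lam z0 max_cases[OF lam, of t] by (cases "t = 0") (auto simp: indicator_def not_le)
  qed
  have ftc: "(\<integral>t. ((2 * deriv w t + t * deriv (deriv w) t) * (1 - lam * t)) * indicator {0..1/lam} t \<partial>lborel)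
      = ((w (1/lam) + (1/lam) * deriv w (1/lam)) * (1 - lam * (1/lam)) + lam * ((1/lam) * w (1/lam)))
        - ((w 0 + 0 * deriv w 0) * (1 - lam * 0) + lam * (0 * w 0))"
    by (rule integral_FTC_Icc_real[where F = "\<lambda>t. (w t + t * deriv w t) * (1 - lam * t) + lam * (t * w t)"])
       (use lam in \<open>auto intro!: derivative_eq_intros d0 d1 continuous_intros cw cw1 c2 simp: algebra_simps\<close>)
  show ?thesis unfolding e1 ftc using lam z0 by simp
qed

lemma G2_facts:
  assumes w: "test_function w"
    and E1_def: "E1 = (\<lambda>t::real. if t \<le> 0 then 0 else w (1/t) - deriv w (1/t) / t)"
    and E2_def: "E2 = (\<lambda>t::real. if t \<le> 0 then 0 else deriv (deriv w) (1/t) / t^3)"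
  shows "\<And>x. ((\<lambda>r. r * w (1/r)) has_real_derivative E1 x) (at x)"
    "\<And>x. (E1 has_real_derivative E2 x) (at x)"
    "\<And>x. isCont E2 x"
    "deriv (deriv (\<lambda>r. r * w (1/r))) = E2"
proof -
  obtain a b where ab: "0 < a" "a \<le> b"
    and d0: "\<And>x. (w has_real_derivative deriv w x) (at x)"
    and d1: "\<And>x. (deriv w has_real_derivative deriv (deriv w) x) (at x)"
    and c2: "\<And>x. isCont (deriv (deriv w)) x"
    and z: "\<And>t. t < a \<or> b < t \<Longrightarrow> w t = 0 \<and> deriv w t = 0 \<and> deriv (deriv w) t = 0"
    using test_facts[OF w] by blast
  define S where "S = {..<1/b}"
  have oS: "open S" unfolding S_def by simp
  have bpos: "b > 0" using ab by simp
  have zS: "w (1/y) = 0 \<and> deriv w (1/y) = 0 \<and> deriv (deriv w) (1/y) = 0" if "y \<in> S" "y \<noteq> 0" for y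
  proof (cases "y < 0")
    case True then have "1/y < a" using ab by (smt (verit) divide_less_0_iff)
    then show ?thesis using z by blast
  next
    case False then have "y > 0" using that by simp
    moreover have "y < 1/b" using that unfolding S_def by simp
    ultimately have "b < 1/y" using bpos by (simp add: field_simps)
    then show ?thesis using z by blast
  qed
  have E1S: "E1 y = 0" if "y \<in> S" for y using zS[OF that] unfolding E1_def by auto
  have E2S: "E2 y = 0" if "y \<in> S" for y using zS[OF that] unfolding E2_def by auto
  have G2S: "y * w (1/y) = 0" if "y \<in> S" for y using zS[OF that] by (cases "y = 0") auto
  have S0: "x \<in> S" if "x \<le> 0" for x using that bpos unfolding S_def
    by (smt (verit) lessThan_iff zero_less_divide_1_iff)
  show D1: "((\<lambda>r. r * w (1/r)) has_real_derivative E1 x) (at x)" for x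
  proof (cases "x \<le> 0")
    case True
    have "((\<lambda>r. r * w (1/r)) has_real_derivative 0) (at x)"
      by (rule deriv_zero_open[OF oS S0[OF True]]) (rule G2S)
    then show ?thesis using True unfolding E1_def by simp
  next
    case False
    then have x: "x > 0" by simp
    have "((\<lambda>r. r * w (1/r)) has_real_derivative
        (1 * w (1/x) + x * (deriv w (1/x) * (- (inverse (x^2))))) ) (at x)"
      using x by (auto intro!: derivative_eq_intros DERIV_chain2[OF d0] simp: divide_inverse power2_eq_square)
    moreover have "1 * w (1/x) + x * (deriv w (1/x) * (- (inverse (x^2)))) = E1 x"
      using x unfolding E1_def by (simp add: field_simps power2_eq_square)
    ultimately show ?thesis by simp
  qed
  show D2: "(E1 has_real_derivative E2 x) (at x)" for x
  proof (cases "x \<le> 0")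
    case True
    have "(E1 has_real_derivative 0) (at x)"
      by (rule deriv_zero_open[OF oS S0[OF True]]) (rule E1S)
    then show ?thesis using True unfolding E2_def by simp
  next
    case False
    then have x: "x > 0" by simp
    have "((\<lambda>r. w (1/r) - deriv w (1/r) / r) has_real_derivative
        (deriv w (1/x) * (- (inverse (x^2))) - ((deriv (deriv w) (1/x) * (- (inverse (x^2)))) * x - deriv w (1/x) * 1) / (x * x))) (at x)"
      using x by (auto intro!: derivative_eq_intros DERIV_chain2[OF d0] DERIV_chain2[OF d1]
          simp: divide_inverse power2_eq_square) (auto simp: field_simps)
    moreover have "deriv w (1/x) * (- (inverse (x^2))) - ((deriv (deriv w) (1/x) * (- (inverse (x^2)))) * x - deriv w (1/x) * 1) / (x * x) = E2 x"
      using x unfolding E2_def by (simp add: field_simps power2_eq_square power3_eq_cube)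
    ultimately have "((\<lambda>r. w (1/r) - deriv w (1/r) / r) has_real_derivative E2 x) (at x)" by simp
    then show ?thesis
      by (rule has_field_derivative_transform_within_open[where S = "{0<..}"]) (use x in \<open>auto simp: E1_def\<close>)
  qed
  show "isCont E2 x" for x
  proof (cases "x \<le> 0")
    case True
    show ?thesis by (rule isCont_transform_open[OF continuous_const oS S0[OF True]]) (simp add: E2S)
  next
    case False
    then have x: "x > 0" by simp
    have "isCont (\<lambda>t. deriv (deriv w) (1/t) / t^3) x"
      using x by (auto intro!: continuous_intros isCont_o2[OF _ c2])
    then show ?thesis
      by (rule isCont_transform_open[where S = "{0<..}"]) (use x in \<open>auto simp: E2_def\<close>)
  qed
  have "deriv (\<lambda>r. r * w (1/r)) = E1" using D1 DERIV_imp_deriv by blast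
  moreover have "deriv E1 = E2" using D2 DERIV_imp_deriv by blast
  ultimately show "deriv (deriv (\<lambda>r. r * w (1/r))) = E2" by simp
qed

lemma GF_psi_real:
  assumes w: "test_function w" and lam: "lam > 0"
  shows "(\<integral>t. (deriv (deriv (\<lambda>r. r * w (1/r))) t * max (1 - lam * t) 0) * indicator {0<..} t \<partial>lborel)
       = w lam"
proof -
  define E1 where "E1 = (\<lambda>t::real. if t \<le> 0 then 0 else w (1/t) - deriv w (1/t) / t)"
  define E2 where "E2 = (\<lambda>t::real. if t \<le> 0 then 0 else deriv (deriv w) (1/t) / t^3)"
  define G2 where "G2 \<equiv> (\<lambda>r::real. r * w (1/r))"
  note G = G2_facts[OF w E1_def E2_def, folded G2_def]
  obtain a b where d0: "\<And>x. (w has_real_derivative deriv w x) (at x)"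
    using test_facts[OF w] by blast
  have e1: "(\<lambda>t. (E2 t * max (1 - lam * t) 0) * indicator {0<..} t)
      = (\<lambda>t. (E2 t * (1 - lam * t)) * indicator {0..1/lam} t)"
  proof
    fix t show "(E2 t * max (1 - lam * t) 0) * indicator {0<..} t
      = (E2 t * (1 - lam * t)) * indicator {0..1/lam} t"
      using lam max_cases[OF lam, of t] by (cases "t = 0") (auto simp: indicator_def not_le E2_def)
  qed
  have ftc: "(\<integral>t. (E2 t * (1 - lam * t)) * indicator {0..1/lam} t \<partial>lborel)
      = (E1 (1/lam) * (1 - lam * (1/lam)) + lam * G2 (1/lam))
        - (E1 0 * (1 - lam * 0) + lam * G2 0)"
    by (rule integral_FTC_Icc_real[where F = "\<lambda>t. E1 t * (1 - lam * t) + lam * G2 t"])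
       (use lam in \<open>auto intro!: derivative_eq_intros G(1,2) continuous_intros G(3) simp: algebra_simps\<close>)
  have G4: "deriv (deriv (\<lambda>r. r * w (1/r))) = E2" using G2_facts(4)[OF w E1_def E2_def] .
  show ?thesis unfolding G4 e1 ftc using lam by (simp add: E1_def G2_def)
qed

lemma VM_deriv:
  assumes w: "test_function w"
  shows "deriv (\<lambda>r. r^2 * deriv (\<lambda>x. w x / x) r) = (\<lambda>s. s * deriv (deriv w) s)"
proof -
  obtain a b where ab: "0 < a" "a \<le> b"
    and d0: "\<And>x. (w has_real_derivative deriv w x) (at x)"
    and d1: "\<And>x. (deriv w has_real_derivative deriv (deriv w) x) (at x)"
    and c2: "\<And>x. isCont (deriv (deriv w)) x"
    and z: "\<And>t. t < a \<or> b < t \<Longrightarrow> w t = 0 \<and> deriv w t = 0 \<and> deriv (deriv w) t = 0"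
    using test_facts[OF w] by blast
  have z0: "w 0 = 0" "deriv w 0 = 0" using z ab by auto
  have dq: "deriv (\<lambda>x. w x / x) r = deriv w r / r - w r / r^2" for r
  proof (cases "r = 0")
    case True
    have "((\<lambda>x. w x / x) has_real_derivative 0) (at r)"
    proof (rule deriv_zero_open[of "{..<a}"])
      show "open {..<a}" by simp
      show "r \<in> {..<a}" using True ab by simp
      fix y assume "y \<in> {..<a}"
      then have "w y = 0" using z by simp
      then show "w y / y = 0" by simp
    qed
    then have "deriv (\<lambda>x. w x / x) r = 0" by (rule DERIV_imp_deriv)
    then show ?thesis using True by simp
  next
    case False
    have "((\<lambda>x. w x / x) has_real_derivative (deriv w r * r - w r * 1) / (r * r)) (at r)"
      using False by (intro DERIV_divide d0 DERIV_ident) auto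
    moreover have "(deriv w r * r - w r * 1) / (r * r) = deriv w r / r - w r / r^2"
      using False by (simp add: diff_divide_distrib power2_eq_square)
    ultimately show ?thesis by (metis DERIV_imp_deriv)
  qed
  have "(\<lambda>r. r^2 * deriv (\<lambda>x. w x / x) r) = (\<lambda>r. r * deriv w r - w r)"
  proof
    fix r show "r^2 * deriv (\<lambda>x. w x / x) r = r * deriv w r - w r"
    proof (cases "r = 0")
      case True then show ?thesis using z0 by simp
    next
      case False
      have "r^2 * (deriv w r / r - w r / r^2) = r * deriv w r - w r"
        using False by (simp add: field_simps power2_eq_square)
      then show ?thesis unfolding dq .
    qed
  qed
  moreover have "deriv (\<lambda>r. r * deriv w r - w r) = (\<lambda>s. s * deriv (deriv w) s)"
  proof
    fix x show "deriv (\<lambda>r. r * deriv w r - w r) x = x * deriv (deriv w) x"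
      by (rule DERIV_imp_deriv) (auto intro!: derivative_eq_intros d0 d1)
  qed
  ultimately show ?thesis by simp
qed

lemma VM_psi_real:
  assumes w: "test_function w" and lam: "lam > 0"
  shows "(\<integral>s. (s * deriv (deriv w) s * max (1 - lam * (1/s)) 0) * indicator {0<..} s \<partial>lborel) = w lam"
proof -
  obtain a b where ab: "0 < a" "a \<le> b"
    and d0: "\<And>x. (w has_real_derivative deriv w x) (at x)"
    and d1: "\<And>x. (deriv w has_real_derivative deriv (deriv w) x) (at x)"
    and c2: "\<And>x. isCont (deriv (deriv w)) x"
    and z: "\<And>t. t < a \<or> b < t \<Longrightarrow> w t = 0 \<and> deriv w t = 0 \<and> deriv (deriv w) t = 0"
    using test_facts[OF w] by blast
  define B where "B = b + lam"
  have zB: "w B = 0" "deriv w B = 0" using z lam unfolding B_def by auto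
  have e1: "(\<lambda>s. (s * deriv (deriv w) s * max (1 - lam * (1/s)) 0) * indicator {0<..} s)
      = (\<lambda>s. ((s - lam) * deriv (deriv w) s) * indicator {lam..B} s)"
  proof
    fix s
    consider "s \<le> 0" | "0 < s" "s < lam" | "lam \<le> s" "s \<le> B" | "B < s" by linarith
    then show "(s * deriv (deriv w) s * max (1 - lam * (1/s)) 0) * indicator {0<..} s
      = ((s - lam) * deriv (deriv w) s) * indicator {lam..B} s"
    proof cases
      case 1 then show ?thesis using lam by (auto simp: indicator_def)
    next
      case 2 then have "max (1 - lam * (1/s)) 0 = 0" by (auto simp: field_simps max_def)
      then show ?thesis using 2 by (auto simp: indicator_def)
    next
      case 3 then have "max (1 - lam * (1/s)) 0 = 1 - lam / s" using lam by (auto simp: field_simps max_def)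
      then show ?thesis using 3 lam by (auto simp: indicator_def field_simps)
    next
      case 4 then have "deriv (deriv w) s = 0" using z lam unfolding B_def by auto
      then show ?thesis by simp
    qed
  qed
  have cw: "\<And>x. isCont w x" using d0 DERIV_isCont by blast
  have cw1: "\<And>x. isCont (deriv w) x" using d1 DERIV_isCont by blast
  have ftc: "(\<integral>s. ((s - lam) * deriv (deriv w) s) * indicator {lam..B} s \<partial>lborel)
      = ((B - lam) * deriv w B - w B) - ((lam - lam) * deriv w lam - w lam)"
    by (rule integral_FTC_Icc_real[where F = "\<lambda>s. (s - lam) * deriv w s - w s"])
       (use lam ab in \<open>auto intro!: derivative_eq_intros d0 d1 continuous_intros c2 simp: B_def algebra_simps\<close>)
  show ?thesis unfolding e1 ftc using zB by simp
qed


lemma IS_phi_real: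
  assumes w: "test_function w" and lam: "lam > 0"
  shows "(\<integral>t. (deriv w t * (if lam \<le> 1/t then 1 else 0)) * indicator {0<..} t \<partial>lborel) = w (1/lam)"
proof -
  obtain a b where ab: "0 < a" "a \<le> b"
    and d0: "\<And>x. (w has_real_derivative deriv w x) (at x)"
    and d1: "\<And>x. (deriv w has_real_derivative deriv (deriv w) x) (at x)"
    and c2: "\<And>x. isCont (deriv (deriv w)) x"
    and z: "\<And>t. t < a \<or> b < t \<Longrightarrow> w t = 0 \<and> deriv w t = 0 \<and> deriv (deriv w) t = 0"
    using test_facts[OF w] by blast
  have z0: "w 0 = 0" "deriv w 0 = 0" using z ab by auto
  have cw1: "\<And>x. isCont (deriv w) x" using d1 DERIV_isCont by blast
  have e1: "(\<lambda>t. (deriv w t * (if lam \<le> 1/t then 1 else 0)) * indicator {0<..} t)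
      = (\<lambda>t. deriv w t * indicator {0..1/lam} t)"
  proof
    fix t :: real
    consider "t < 0" | "t = 0" | "t > 0" by linarith
    then show "(deriv w t * (if lam \<le> 1/t then 1 else 0)) * indicator {0<..} t
      = deriv w t * indicator {0..1/lam} t"
    proof cases
      case 3 then have "(lam \<le> 1/t) = (t \<le> 1/lam)" using lam by (auto simp: field_simps)
      then show ?thesis using 3 by (auto simp: indicator_def)
    qed (use z0 in \<open>auto simp: indicator_def\<close>)
  qed
  have ftc: "(\<integral>t. deriv w t * indicator {0..1/lam} t \<partial>lborel) = w (1/lam) - w 0"
    by (rule integral_FTC_Icc_real) (use lam in \<open>auto intro!: d0 cw1\<close>)
  show ?thesis unfolding e1 ftc using z0 by simp
qed

lemma IS_psi_real:
  assumes w: "test_function w" and lam: "lam > 0"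
  shows "(\<integral>s. (deriv w s * (if lam \<le> s then 1 else 0)) * indicator {0<..} s \<partial>lborel) = - w lam"
proof -
  obtain a b where ab: "0 < a" "a \<le> b"
    and d0: "\<And>x. (w has_real_derivative deriv w x) (at x)"
    and d1: "\<And>x. (deriv w has_real_derivative deriv (deriv w) x) (at x)"
    and c2: "\<And>x. isCont (deriv (deriv w)) x"
    and z: "\<And>t. t < a \<or> b < t \<Longrightarrow> w t = 0 \<and> deriv w t = 0 \<and> deriv (deriv w) t = 0"
    using test_facts[OF w] by blast
  define B where "B = b + lam"
  have zB: "w B = 0" "\<And>s. s > B \<Longrightarrow> deriv w s = 0" using z lam unfolding B_def by auto
  have cw1: "\<And>x. isCont (deriv w) x" using d1 DERIV_isCont by blast
  have e1: "(\<lambda>s. (deriv w s * (if lam \<le> s then 1 else 0)) * indicator {0<..} s)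
      = (\<lambda>s. deriv w s * indicator {lam..B} s)"
  proof
    fix s show "(deriv w s * (if lam \<le> s then 1 else 0)) * indicator {0<..} s
      = deriv w s * indicator {lam..B} s"
      using lam zB(2)[of s] by (auto simp: indicator_def)
  qed
  have ftc: "(\<integral>s. deriv w s * indicator {lam..B} s \<partial>lborel) = w B - w lam"
    by (rule integral_FTC_Icc_real) (use lam ab in \<open>auto intro!: d0 cw1 simp: B_def\<close>)
  show ?thesis unfolding e1 ftc using zB by simp
qed

lemma IS_dd_real:
  assumes w: "test_function w" and lam: "lam > 0"
  shows "(\<integral>t. (deriv w t * min t lam) * indicator {0<..} t \<partial>lborel)
       = - (\<integral>t. (w t * (1 - (if lam < t then 1 else 0))) * indicator {0<..} t \<partial>lborel)"
proof -
  obtain a b where ab: "0 < a" "a \<le> b"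
    and d0: "\<And>x. (w has_real_derivative deriv w x) (at x)"
    and d1: "\<And>x. (deriv w has_real_derivative deriv (deriv w) x) (at x)"
    and c2: "\<And>x. isCont (deriv (deriv w)) x"
    and z: "\<And>t. t < a \<or> b < t \<Longrightarrow> w t = 0 \<and> deriv w t = 0 \<and> deriv (deriv w) t = 0"
    using test_facts[OF w] by blast
  define B where "B = b + lam"
  have zB: "w B = 0" "\<And>s. s > B \<Longrightarrow> deriv w s = 0" using z lam unfolding B_def by auto
  have z0: "w 0 = 0" "deriv w 0 = 0" using z ab by auto
  have cw: "\<And>x. isCont w x" using d0 DERIV_isCont by blast
  have cw1: "\<And>x. isCont (deriv w) x" using d1 DERIV_isCont by blast
  have lB: "lam \<le> B" using ab unfolding B_def by simp
  have e1: "(\<lambda>t. (deriv w t * min t lam) * indicator {0<..} t)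
      = (\<lambda>t. (lam * deriv w t) * indicator {0..B} t - ((lam - t) * deriv w t) * indicator {0..lam} t)"
  proof
    fix t
    consider "t \<le> 0" | "0 < t" "t \<le> lam" | "lam < t" "t \<le> B" | "B < t" by linarith
    then show "(deriv w t * min t lam) * indicator {0<..} t
      = (lam * deriv w t) * indicator {0..B} t - ((lam - t) * deriv w t) * indicator {0..lam} t"
    proof cases
      case 1 then show ?thesis using z0 lam lB
        by (cases "t = 0") (auto simp: indicator_def)
    next
      case 2 then show ?thesis using lB by (auto simp: indicator_def algebra_simps min_def)
    next
      case 3 then show ?thesis using lam by (auto simp: indicator_def min_def)
    next
      case 4 then show ?thesis using lam lB zB(2)[of t] by (auto simp: indicator_def)
    qed
  qed
  have e2: "(\<lambda>t. (w t * (1 - (if lam < t then 1 else 0))) * indicator {0<..} t)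
      = (\<lambda>t. w t * indicator {0..lam} t)"
  proof
    fix t show "(w t * (1 - (if lam < t then 1 else 0))) * indicator {0<..} t = w t * indicator {0..lam} t"
      using z0 lam by (cases "t = 0") (auto simp: indicator_def)
  qed
  have i1: "integrable lborel (\<lambda>t. (lam * deriv w t) * indicator {0..B} t)"
    by (rule int_cont) (intro continuous_intros cw1)
  have i2: "integrable lborel (\<lambda>t. ((lam - t) * deriv w t) * indicator {0..lam} t)"
    by (rule int_cont) (intro continuous_intros cw1)
  have i3: "integrable lborel (\<lambda>t. ((lam - t) * deriv w t - w t) * indicator {0..lam} t)"
    by (rule int_cont) (intro continuous_intros cw cw1)
  have i4: "integrable lborel (\<lambda>t. w t * indicator {0..lam} t)"
    by (rule int_cont) (intro continuous_intros cw)
  have f1: "(\<integral>t. (lam * deriv w t) * indicator {0..B} t \<partial>lborel) = lam * w B - lam * w 0"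
    by (rule integral_FTC_Icc_real) (use lam lB in \<open>auto intro!: derivative_eq_intros d0 continuous_intros cw1\<close>)
  have f2: "(\<integral>t. ((lam - t) * deriv w t - w t) * indicator {0..lam} t \<partial>lborel)
       = (lam - lam) * w lam - (lam - 0) * w 0"
    by (rule integral_FTC_Icc_real[where F = "\<lambda>t. (lam - t) * w t"])
       (use lam in \<open>auto intro!: derivative_eq_intros d0 continuous_intros cw cw1 simp: algebra_simps\<close>)
  have "(\<integral>t. ((lam - t) * deriv w t) * indicator {0..lam} t \<partial>lborel)
      = (\<integral>t. ((lam - t) * deriv w t - w t) * indicator {0..lam} t + w t * indicator {0..lam} t \<partial>lborel)"
    by (rule arg_cong[where f = "integral\<^sup>L lborel"]) (auto simp: algebra_simps)
  also have "\<dots> = (\<integral>t. ((lam - t) * deriv w t - w t) * indicator {0..lam} t \<partial>lborel)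
      + (\<integral>t. w t * indicator {0..lam} t \<partial>lborel)"
    by (rule Bochner_Integration.integral_add[OF i3 i4])
  finally have f3: "(\<integral>t. ((lam - t) * deriv w t) * indicator {0..lam} t \<partial>lborel)
      = (\<integral>t. w t * indicator {0..lam} t \<partial>lborel)" unfolding f2 using z0 by simp
  show ?thesis unfolding e1 e2 Bochner_Integration.integral_diff[OF i1 i2] f1 f3 using z0 zB by simp
qed

lemma bdd_set_integrable:
  fixes f :: "'a::{banach,second_countable_topology,real_inner}" and c :: "real \<Rightarrow> real"
  assumes "c \<in> borel_measurable lborel" "\<And>x. \<bar>c x\<bar> \<le> K"
  shows "set_integrable lborel {a..b} (\<lambda>x. c x *\<^sub>R f)"
proof (rule set_integrable_bound[where f = "\<lambda>_. K *\<^sub>R f"])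
  show "set_integrable lborel {a..b} (\<lambda>_. K *\<^sub>R f)"
    unfolding set_integrable_def by (rule borel_integrable_compact) auto
  show "set_borel_measurable lborel {a..b} (\<lambda>x. c x *\<^sub>R f)"
    unfolding set_borel_measurable_def using assms(1) by measurable
  have K: "K \<ge> 0" using assms(2)[of 0] by simp
  show "AE x in lborel. x \<in> {a..b} \<longrightarrow> norm (c x *\<^sub>R f) \<le> norm (K *\<^sub>R f)"
    using assms(2) K by (auto intro!: mult_right_mono)
qed

lemma AE_inv:
  fixes v V :: "real \<Rightarrow> 'a::{banach,second_countable_topology}"
  assumes ae: "AE s in lborel. s > 0 \<longrightarrow> v s = V s"
  shows "AE t in lborel. t \<in> {0<..} \<longrightarrow> v (1/t) = V (1/t)"
proof -
  from ae obtain N where N1: "{s \<in> space lborel. \<not> (s > 0 \<longrightarrow> v s = V s)} \<subseteq> N"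
    and N2: "emeasure lborel N = 0" and N3: "N \<in> sets lborel"
    by (rule AE_E)
  have N: "{s \<in> space lborel. \<not> (s > 0 \<longrightarrow> v s = V s)} \<subseteq> N" "N \<in> null_sets lborel"
    using N1 N2 N3 by (auto intro: null_setsI)
  have "negligible N" using null_sets_completionI[OF N(2)] by (simp add: negligible_iff_null_sets)
  then have "negligible (N \<inter> {0<..})" by (rule negligible_subset) auto
  moreover have "(\<lambda>s::real. 1/s) differentiable_on (N \<inter> {0<..})"
    by (auto intro!: derivative_intros simp: differentiable_on_def)
  ultimately have "negligible ((\<lambda>s::real. 1/s) ` (N \<inter> {0<..}))"
    by (intro negligible_differentiable_image_negligible) auto
  then have nn: "(\<lambda>s::real. 1/s) ` (N \<inter> {0<..}) \<in> null_sets lebesgue" by (simp add: negligible_iff_null_sets)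
  have "AE t in lebesgue. t \<in> {0<..} \<longrightarrow> v (1/t) = V (1/t)"
  proof (rule AE_I'[OF nn])
    show "{t \<in> space lebesgue. \<not> (t \<in> {0<..} \<longrightarrow> v (1/t) = V (1/t))} \<subseteq> (\<lambda>s::real. 1/s) ` (N \<inter> {0<..})"
    proof
      fix t assume t: "t \<in> {t \<in> space lebesgue. \<not> (t \<in> {0<..} \<longrightarrow> v (1/t) = V (1/t))}"
      then have "1/t \<in> N" "1/t > 0" using N(1) by auto
      then show "t \<in> (\<lambda>s::real. 1/s) ` (N \<inter> {0<..})" by (intro image_eqI[of _ _ "1/t"]) auto
    qed
  qed
  then show ?thesis by (simp add: AE_completion_iff)
qed


lemma int_replace:
  fixes v V :: "real \<Rightarrow> 'a::{banach,second_countable_topology}" and g :: "real \<Rightarrow> real"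
  assumes mv: "\<And>c d. 0 < c \<Longrightarrow> (\<lambda>s. indicator {c..d} s *\<^sub>R v s) \<in> borel_measurable lborel"
    and mV: "\<And>c d. 0 < c \<Longrightarrow> (\<lambda>s. indicator {c..d} s *\<^sub>R V s) \<in> borel_measurable lborel"
    and g: "g \<in> borel_measurable lborel" "0 < a" "a \<le> b" "\<And>t. t < a \<or> b < t \<Longrightarrow> g t = 0"
    and ae: "AE s in lborel. s > 0 \<longrightarrow> v s = V s"
  shows "(LINT t:{0<..}|lborel. g t *\<^sub>R v t) = (LINT t:{0<..}|lborel. g t *\<^sub>R V t)"
    "(LINT t:{0<..}|lborel. g t *\<^sub>R v (1/t)) = (LINT t:{0<..}|lborel. g t *\<^sub>R V (1/t))"
proof -
  have e1: "(\<lambda>t. g t *\<^sub>R u t) = (\<lambda>t. g t *\<^sub>R (indicator {a..b} t *\<^sub>R u t))" for u :: "real \<Rightarrow> 'a"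
  proof
    fix t show "g t *\<^sub>R u t = g t *\<^sub>R (indicator {a..b} t *\<^sub>R u t)"
      using g(4)[of t] by (cases "t \<in> {a..b}") (auto simp: indicator_def)
  qed
  have m1: "(\<lambda>t. g t *\<^sub>R v t) \<in> borel_measurable lborel"
    unfolding e1[of v] using g(1) mv[OF g(2), of b] by measurable
  have m2: "(\<lambda>t. g t *\<^sub>R V t) \<in> borel_measurable lborel"
    unfolding e1[of V] using g(1) mV[OF g(2), of b] by measurable
  show "(LINT t:{0<..}|lborel. g t *\<^sub>R v t) = (LINT t:{0<..}|lborel. g t *\<^sub>R V t)"
    by (rule set_lebesgue_integral_cong_AE[OF _ m1 m2]) (use ae in \<open>auto elim!: eventually_mono\<close>)
  have bpos: "0 < 1/b" using g by simp
  have e2: "(\<lambda>t. g t *\<^sub>R u (1/t)) = (\<lambda>t. g t *\<^sub>R ((\<lambda>s. indicator {1/b..1/a} s *\<^sub>R u s) (1/t)))" for u :: "real \<Rightarrow> 'a"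
  proof
    fix t show "g t *\<^sub>R u (1/t) = g t *\<^sub>R ((\<lambda>s. indicator {1/b..1/a} s *\<^sub>R u s) (1/t))"
    proof (cases "t \<in> {a..b}")
      case True then have "1/t \<in> {1/b..1/a}" using g(2) by (auto simp: field_simps)
      then show ?thesis by simp
    qed (use g(4)[of t] in auto)
  qed
  have inv: "(\<lambda>t::real. 1/t) \<in> measurable lborel lborel" by measurable
  have m3: "(\<lambda>t. g t *\<^sub>R v (1/t)) \<in> borel_measurable lborel"
    unfolding e2[of v] using g(1) measurable_compose[OF inv mv[OF bpos, of "1/a"]] by measurable
  have m4: "(\<lambda>t. g t *\<^sub>R V (1/t)) \<in> borel_measurable lborel"
    unfolding e2[of V] using g(1) measurable_compose[OF inv mV[OF bpos, of "1/a"]] by measurable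
  show "(LINT t:{0<..}|lborel. g t *\<^sub>R v (1/t)) = (LINT t:{0<..}|lborel. g t *\<^sub>R V (1/t))"
    by (rule set_lebesgue_integral_cong_AE[OF _ m3 m4]) (use AE_inv[OF ae] in \<open>auto elim!: eventually_mono\<close>)
qed


lemma VM_lower_real:
  fixes f v :: "'a::real_inner"
  assumes t: "t > 0" and lam: "lam > 0" and jv: "jv \<ge> lam * (f \<bullet> v)" "jv \<ge> 0"
    and c: "c = max (1 - lam * t) 0"
  shows "norm (c *\<^sub>R f - f)^2 / 2 + t * (c * (lam * (f \<bullet> f))) + norm (v - c *\<^sub>R f)^2 / 2
       \<le> norm (v - f)^2 / 2 + t * jv"
proof -
  define A where "A = f \<bullet> f"
  define P where "P = f \<bullet> v"
  define W where "W = v \<bullet> v"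
  have n1: "norm (c *\<^sub>R f - f)^2 = (c - 1)^2 * A"
    unfolding power2_norm_eq_inner A_def by (simp add: inner_diff_left inner_diff_right power2_eq_square algebra_simps)
  have n2: "norm (v - c *\<^sub>R f)^2 = W - 2 * c * P + c^2 * A"
    unfolding power2_norm_eq_inner A_def P_def W_def
    by (simp add: inner_diff_left inner_diff_right power2_eq_square algebra_simps inner_commute)
  have n3: "norm (v - f)^2 = W - 2 * P + A"
    unfolding power2_norm_eq_inner A_def P_def W_def
    by (simp add: inner_diff_left inner_diff_right algebra_simps inner_commute)
  have jvP: "jv \<ge> lam * P" using jv P_def by simp
  show ?thesis
  proof (cases "lam * t \<le> 1")
    case True
    then have cc: "c = 1 - lam * t" using c by simp
    have "(c - 1)^2 * A / 2 + t * (c * (lam * A)) + (W - 2 * c * P + c^2 * A) / 2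
        = (W - 2 * P + A) / 2 + t * (lam * P)"
      unfolding cc by (simp add: power2_eq_square field_simps)
    also have "\<dots> \<le> (W - 2 * P + A) / 2 + t * jv" using jvP t by (simp add: mult_left_mono)
    finally show ?thesis unfolding n1 n2 n3 A_def .
  next
    case False
    then have cc: "c = 0" using c by simp
    have "P \<le> t * jv"
    proof (cases "P \<le> 0")
      case True then show ?thesis using t jv by (smt (verit) mult_nonneg_nonneg)
    next
      case False
      have "P \<le> (lam * t) * P" using False \<open>\<not> lam * t \<le> 1\<close> by (simp add: mult_le_cancel_right1)
      also have "\<dots> = t * (lam * P)" by simp
      also have "\<dots> \<le> t * jv" using jvP t by (simp add: mult_left_mono)
      finally show ?thesis .
    qed
    then have "(c - 1)^2 * A / 2 + t * (c * (lam * A)) + (W - 2 * c * P + c^2 * A) / 2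
        \<le> (W - 2 * P + A) / 2 + t * jv" unfolding cc by (simp add: field_simps)
    then show ?thesis unfolding n1 n2 n3 A_def .
  qed
qed

lemma VM_unique:
  fixes X :: "'a::{real_inner,banach,second_countable_topology} set" and J :: "'a \<Rightarrow> ereal"
  assumes X_banach: "banach_embedded X nX"
    and J_nonneg: "\<forall>u\<in>X. J u \<ge> 0"
    and J_hom: "\<forall>u\<in>X. \<forall>c. J (c *\<^sub>R u) = ereal \<bar>c\<bar> * J u"
    and f_X: "f \<in> X"
    and eigen: "lam *\<^sub>R f \<in> subdiff X J f"
    and lam_pos: "lam > 0"
    and t: "t > 0"
    and ut: "ut \<in> X" "\<forall>v\<in>X. ereal (norm (ut - f)^2 / 2) + ereal t * J ut
               \<le> ereal (norm (v - f)^2 / 2) + ereal t * J v"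
  shows "ut = max (1 - lam * t) 0 *\<^sub>R f"
proof -
  note E = eig_basic[OF X_banach J_nonneg J_hom f_X eigen]
  define c where "c = max (1 - lam * t) 0"
  have c0: "c \<ge> 0" unfolding c_def by simp
  have sub: "subspace X" using X_banach unfolding banach_embedded_def by blast
  have cX: "c *\<^sub>R f \<in> X" using sub f_X by (simp add: subspace_scale)
  have "J (c *\<^sub>R f) = ereal \<bar>c\<bar> * J f" using J_hom f_X by blast
  then have Jc: "J (c *\<^sub>R f) = ereal (c * (lam * (f \<bullet> f)))" using E(2) c0 by simp
  define K where "K = norm (c *\<^sub>R f - f)^2 / 2 + t * (c * (lam * (f \<bullet> f)))"
  have up: "ereal (norm (ut - f)^2 / 2) + ereal t * J ut \<le> ereal K"
    using ut(2) cX Jc unfolding K_def by fastforce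
  have low: "ereal (K + norm (ut - c *\<^sub>R f)^2 / 2) \<le> ereal (norm (ut - f)^2 / 2) + ereal t * J ut"
  proof (cases "J ut = \<infinity>")
    case True then show ?thesis using t by simp
  next
    case False
    then obtain jv where jv: "J ut = ereal jv" using J_nonneg ut(1) by (cases "J ut") auto
    have "jv \<ge> lam * (f \<bullet> ut)" using E(3) ut(1) jv by fastforce
    moreover have "jv \<ge> 0" using J_nonneg ut(1) jv by fastforce
    ultimately have "K + norm (ut - c *\<^sub>R f)^2 / 2 \<le> norm (ut - f)^2 / 2 + t * jv"
      using VM_lower_real[OF t lam_pos _ _ c_def] unfolding K_def by fastforce
    then show ?thesis using jv by simp
  qed
  from order_trans[OF low up] have "norm (ut - c *\<^sub>R f)^2 \<le> 0" by simp
  then have "ut - c *\<^sub>R f = 0" by simp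
  then show ?thesis unfolding c_def by simp
qed

theorem mainTheorem1:
  fixes X :: "'a::{real_inner,banach,second_countable_topology} set"
    and nX :: "'a \<Rightarrow> real"
    and J :: "'a \<Rightarrow> ereal"
    and f :: 'a
    and lam :: real
  assumes X_banach: "banach_embedded X nX"
    and J_nonneg: "\<forall>u\<in>X. J u \<ge> 0"
    and J_convex: "\<forall>u\<in>X. \<forall>v\<in>X. \<forall>\<theta>\<in>{0..1}.
                     J (\<theta> *\<^sub>R u + (1 - \<theta>) *\<^sub>R v) \<le> ereal \<theta> * J u + ereal (1 - \<theta>) * J v"
    and J_hom: "\<forall>u\<in>X. \<forall>c. J (c *\<^sub>R u) = ereal \<bar>c\<bar> * J u"
    and J_pos: "\<forall>u\<in>X. u \<noteq> 0 \<longrightarrow> J u > 0"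
    and GF_wellposed: "\<forall>g\<in>X. \<forall>u1 p1 u2 p2. GF_sol X J g u1 p1 \<and> GF_sol X J g u2 p2 \<longrightarrow>
                          (\<forall>t\<ge>0. u1 t = u2 t)"
    and IS_wellposed: "\<forall>g\<in>X. \<forall>v1 q1 v2 q2. IS_sol X J g v1 q1 \<and> IS_sol X J g v2 q2 \<longrightarrow>
                          (AE s in lborel. s > 0 \<longrightarrow> v1 s = v2 s)"
    and f_X: "f \<in> X"
    and lam_pos: "lam > 0"
    and eigen: "lam *\<^sub>R f \<in> subdiff X J f"
  shows "(\<forall>u p. GF_sol X J f u p \<longrightarrow>
            (\<forall>w. test_function w \<longrightarrow>
               phi_tt u w = w (1 / lam) *\<^sub>R f \<and> psi_GF u w = w lam *\<^sub>R f)) \<and>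
         (\<forall>u. VM_sol X J f u \<longrightarrow>
            (\<forall>w. test_function w \<longrightarrow>
               phi_tt u w = w (1 / lam) *\<^sub>R f \<and> psi_VM u w = w lam *\<^sub>R f)) \<and>
         (\<forall>v q. IS_sol X J f v q \<longrightarrow>
            (\<forall>w. test_function w \<longrightarrow>
               phi_IS v w = w (1 / lam) *\<^sub>R f \<and> psi_IS v w = w lam *\<^sub>R f))"
proof -
  note E = eig_basic[OF X_banach J_nonneg J_hom f_X eigen]
  note SD = eig_subdiff[OF X_banach J_nonneg J_hom f_X eigen lam_pos]
  define uG where "uG = (\<lambda>t::real. max (1 - lam * t) 0 *\<^sub>R f)"
  define pG where "pG = (\<lambda>t::real. (if t \<le> 1 / lam then lam else 0) *\<^sub>R f)"
  have phi_uG: "phi_tt uG w = w (1 / lam) *\<^sub>R f" if w: "test_function w" for w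
    unfolding phi_tt_def uG_def G1_deriv[OF w] vec_reduce GF_phi_real[OF w lam_pos] ..
  have psi_uG: "psi_GF uG w = w lam *\<^sub>R f" if w: "test_function w" for w
    unfolding psi_GF_def uG_def vec_reduce GF_psi_real[OF w lam_pos] ..
  have psiVM_uG: "psi_VM uG w = w lam *\<^sub>R f" if w: "test_function w" for w
    unfolding psi_VM_def uG_def VM_deriv[OF w] vec_reduce VM_psi_real[OF w lam_pos] ..
  have cont_uG: "continuous_on {0..} uG" unfolding uG_def by (intro continuous_intros)
  have GF_ok: "GF_sol X J f uG pG"
    unfolding GF_sol_def
  proof (intro conjI allI impI)
    show "continuous_on {0..} uG" by (rule cont_uG)
    show "uG 0 = f" unfolding uG_def by simp
    fix t :: real assume t: "t > 0"
    show "pG t \<in> subdiff X J (uG t)"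
      unfolding pG_def uG_def
      by (rule SD) (use lam_pos max_cases[OF lam_pos, of t] in auto)
  next
    have mp: "(\<lambda>t. - pG t) = (\<lambda>t. (- (if t \<le> 1 / lam then lam else 0)) *\<^sub>R f)"
      unfolding pG_def by auto
    show "dist_deriv uG (\<lambda>t. - pG t)"
      unfolding dist_deriv_def
    proof (intro conjI allI impI)
      fix a b :: real
      show "set_integrable lborel {a..b} uG"
        unfolding set_integrable_def
        by (rule borel_integrable_compact) (auto simp: uG_def intro!: continuous_intros)
      show "set_integrable lborel {a..b} (\<lambda>t. - pG t)"
        unfolding mp by (rule bdd_set_integrable[where K = lam]) (use lam_pos in auto)
    next
      fix w assume w: "test_function w"
      have neg: "(\<integral>t. (w t * - (if t \<le> 1 / lam then lam else 0)) * indicator {0<..} t \<partial>lborel)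
          = - (\<integral>t. (w t * (if t \<le> 1 / lam then lam else 0)) * indicator {0<..} t \<partial>lborel)"
      proof -
        have "(\<lambda>t. (w t * - (if t \<le> 1 / lam then lam else 0)) * indicator {0<..} t)
            = (\<lambda>t. - ((w t * (if t \<le> 1 / lam then lam else 0)) * indicator {0<..} t))" by auto
        then show ?thesis by (simp only: Bochner_Integration.integral_minus)
      qed
      show "(LINT t:{0<..}|lborel. deriv w t *\<^sub>R uG t) = - (LINT t:{0<..}|lborel. w t *\<^sub>R - pG t)"
      proof -
        have mp2: "\<And>t. w t *\<^sub>R - pG t = w t *\<^sub>R ((- (if t \<le> 1 / lam then lam else 0)) *\<^sub>R f)"
          unfolding pG_def by simp
        show ?thesis unfolding mp2 unfolding uG_def vec_reduce neg GF_dd_real[OF w lam_pos] by simp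
      qed
    qed
  qed
  show ?thesis
  proof (intro conjI allI impI)
    fix u p w assume sol: "GF_sol X J f u p" and w: "test_function w"
    have eq: "\<forall>t\<ge>0. u t = uG t" using GF_wellposed f_X sol GF_ok by blast
    have "phi_tt u w = phi_tt uG w" unfolding phi_tt_def
      by (rule set_lebesgue_integral_cong) (use eq in auto)
    then show "phi_tt u w = w (1 / lam) *\<^sub>R f" using phi_uG[OF w] by simp
    have "psi_GF u w = psi_GF uG w" unfolding psi_GF_def
      by (rule set_lebesgue_integral_cong) (use eq in auto)
    then show "psi_GF u w = w lam *\<^sub>R f" using psi_uG[OF w] by simp
  next
    fix u w assume sol: "VM_sol X J f u" and w: "test_function w"
    have eq: "u t = uG t" if t: "t > 0" for t
      unfolding uG_def
      by (rule VM_unique[OF X_banach J_nonneg J_hom f_X eigen lam_pos t])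
         (use sol t in \<open>auto simp: VM_sol_def\<close>)
    have "phi_tt u w = phi_tt uG w" unfolding phi_tt_def
      by (rule set_lebesgue_integral_cong) (use eq in auto)
    then show "phi_tt u w = w (1 / lam) *\<^sub>R f" using phi_uG[OF w] by simp
    have "psi_VM u w = psi_VM uG w" unfolding psi_VM_def
      by (rule set_lebesgue_integral_cong) (use eq in auto)
    then show "psi_VM u w = w lam *\<^sub>R f" using psiVM_uG[OF w] by simp
  next
    fix v q w assume sol: "IS_sol X J f v q" and w: "test_function w"
    define vI where "vI = (\<lambda>s::real. (if lam < s then 1 else 0) *\<^sub>R f)"
    define qI where "qI = (\<lambda>s::real. min s lam *\<^sub>R f)"
    have IS_ok: "IS_sol X J f vI qI"
      unfolding IS_sol_def
    proof (intro conjI allI impI)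
      show "vI 0 = 0" unfolding vI_def using lam_pos by simp
      show "continuous_on {0..} qI" unfolding qI_def by (intro continuous_intros)
      show "qI 0 = 0" unfolding qI_def using lam_pos by simp
      fix s :: real assume s: "s > 0"
      show "qI s \<in> subdiff X J (vI s)"
        unfolding qI_def vI_def by (rule SD) (use s lam_pos in auto)
    next
      have md: "(\<lambda>s. f - vI s) = (\<lambda>s. (1 - (if lam < s then 1 else 0)) *\<^sub>R f)"
        unfolding vI_def by (auto simp: algebra_simps)
      show "dist_deriv qI (\<lambda>s. f - vI s)"
        unfolding dist_deriv_def
      proof (intro conjI allI impI)
        fix a b :: real
        show "set_integrable lborel {a..b} qI"
          unfolding set_integrable_def
          by (rule borel_integrable_compact) (auto simp: qI_def intro!: continuous_intros)
        show "set_integrable lborel {a..b} (\<lambda>s. f - vI s)"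
          unfolding md by (rule bdd_set_integrable[where K = 1]) auto
      next
        fix w assume w: "test_function w"
        show "(LINT t:{0<..}|lborel. deriv w t *\<^sub>R qI t) = - (LINT t:{0<..}|lborel. w t *\<^sub>R (f - vI t))"
        proof -
          have md2: "\<And>t. w t *\<^sub>R (f - vI t) = w t *\<^sub>R ((1 - (if lam < t then 1 else 0)) *\<^sub>R f)"
            unfolding vI_def by (simp add: algebra_simps)
          show ?thesis unfolding md2 unfolding qI_def vec_reduce IS_dd_real[OF w lam_pos] by simp
        qed
      qed
    qed
    define V1 where "V1 = (\<lambda>s::real. (if lam \<le> s then 1 else 0) *\<^sub>R f)"
    have ae0: "AE s in lborel. s > 0 \<longrightarrow> v s = vI s" using IS_wellposed f_X sol IS_ok by blast
    have ae: "AE s in lborel. s > 0 \<longrightarrow> v s = V1 s"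
      using ae0 AE_lborel_singleton[of lam]
      by eventually_elim (auto simp: vI_def V1_def)
    have mv: "(\<lambda>s. indicator {c..d} s *\<^sub>R v s) \<in> borel_measurable lborel" if c: "0 < c" for c d
    proof -
      have "set_integrable lborel {c..d} (\<lambda>s. f - v s)"
        using sol c unfolding IS_sol_def dist_deriv_def by blast
      then have m: "(\<lambda>s. indicator {c..d} s *\<^sub>R (f - v s)) \<in> borel_measurable lborel"
        unfolding set_integrable_def by (rule borel_measurable_integrable)
      have "(\<lambda>s. indicator {c..d} s *\<^sub>R v s) = (\<lambda>s. indicator {c..d} s *\<^sub>R f - indicator {c..d} s *\<^sub>R (f - v s))"
        by (auto simp: algebra_simps)
      then show ?thesis using m by simp
    qed
    have mV: "(\<lambda>s. indicator {c..d} s *\<^sub>R V1 s) \<in> borel_measurable lborel" for c d :: real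
      unfolding V1_def by measurable
    obtain a b where ab: "0 < a" "a \<le> b"
      and d0: "\<And>x. (w has_real_derivative deriv w x) (at x)"
      and d1: "\<And>x. (deriv w has_real_derivative deriv (deriv w) x) (at x)"
      and c2: "\<And>x. isCont (deriv (deriv w)) x"
      and z: "\<And>t. t < a \<or> b < t \<Longrightarrow> w t = 0 \<and> deriv w t = 0 \<and> deriv (deriv w) t = 0"
      using test_facts[OF w] by blast
    have gm: "deriv w \<in> borel_measurable lborel"
    proof -
      have "continuous_on UNIV (deriv w)"
        using d1 DERIV_isCont by (intro continuous_at_imp_continuous_on) blast
      then have "deriv w \<in> borel_measurable borel" by (rule borel_measurable_continuous_onI)
      then show ?thesis by simp
    qed
    have zg: "\<And>t. t < a \<or> b < t \<Longrightarrow> deriv w t = 0" using z by blast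
    have "phi_IS v w = (LINT t:{0<..}|lborel. deriv w t *\<^sub>R V1 (1/t))"
      unfolding phi_IS_def using int_replace(2)[OF mv mV gm ab zg ae] by simp
    also have "\<dots> = w (1 / lam) *\<^sub>R f"
      unfolding V1_def vec_reduce IS_phi_real[OF w lam_pos] ..
    finally show "phi_IS v w = w (1 / lam) *\<^sub>R f" .
    have "psi_IS v w = - (LINT t:{0<..}|lborel. deriv w t *\<^sub>R V1 t)"
      unfolding psi_IS_def using int_replace(1)[OF mv mV gm ab zg ae] by simp
    also have "\<dots> = w lam *\<^sub>R f"
      unfolding V1_def vec_reduce IS_psi_real[OF w lam_pos] by simp
    finally show "psi_IS v w = w lam *\<^sub>R f" .
  qed
qed

end
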